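(* Let $G_{\lambda,k}$ be a skeleton of a connected graph $G$ with natural map $f$ and let $M=\min\{\lambda,k\}$. If two vertices $x,y\in G_{\lambda,k}$ satisfy $d(x,y)\ge N$, then their preimages $f^{-1}(x)$, $f^{-1}(y)$ in $G$ are $M(N-1)$-disjoint.
   Context: $d$ is the graph metric. Sets $X,Y$ are $r$-disjoint if $d(a,b)>r$ for all $a\in X,b\in Y$. A set $X$ is $k$-connected if any two of its points are joined by a finite sequence in $X$ with consecutive distances $\le k$. Skeleton $G_{\lambda,k}$ (root $x_0\in V(G)$, scale $\lambda\ge1$, connectivity $k\ge1$): layers $A_{N,\lambda}=\{x: N\lambda<d(x,x_0)\le(N+1)\lambda\}$, $N\in\mathbb Z$; blocks are the maximal $k$-connected subsets of layers; $G_{\lambda,k}$ has a vertex per block and an edge between two blocks iff an edge of $G$ joins them. The natural map $f$ sends each vertex of $G$ to its block. *)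

theory Defs
  imports Main
begin

definition graph :: "'a set \<Rightarrow> ('a \<Rightarrow> 'a \<Rightarrow> bool) \<Rightarrow> bool" where
  "graph V E \<longleftrightarrow> (\<forall>u v. E u v \<longrightarrow> u \<in> V \<and> v \<in> V \<and> E v u \<and> u \<noteq> v)"

definition adj :: "('a \<Rightarrow> 'a \<Rightarrow> bool) \<Rightarrow> ('a \<times> 'a) set" where
  "adj E = {(u, v). E u v}"

definition connected_graph :: "'a set \<Rightarrow> ('a \<Rightarrow> 'a \<Rightarrow> bool) \<Rightarrow> bool" where
  "connected_graph V E \<longleftrightarrow> graph V E \<and> V \<noteq> {} \<and>
     (\<forall>x\<in>V. \<forall>y\<in>V. (x, y) \<in> (adj E)\<^sup>*)"

definition gdist :: "('a \<Rightarrow> 'a \<Rightarrow> bool) \<Rightarrow> 'a \<Rightarrow> 'a \<Rightarrow> nat" where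
  "gdist E x y = (LEAST n. (x, y) \<in> (adj E) ^^ n)"

definition r_disjoint :: "('a \<Rightarrow> 'a \<Rightarrow> bool) \<Rightarrow> int \<Rightarrow> 'a set \<Rightarrow> 'a set \<Rightarrow> bool" where
  "r_disjoint E r X Y \<longleftrightarrow> (\<forall>a\<in>X. \<forall>b\<in>Y. int (gdist E a b) > r)"

definition k_connected :: "('a \<Rightarrow> 'a \<Rightarrow> bool) \<Rightarrow> nat \<Rightarrow> 'a set \<Rightarrow> bool" where
  "k_connected E k X \<longleftrightarrow>
     (\<forall>a\<in>X. \<forall>b\<in>X. (a, b) \<in> {(u, v). u \<in> X \<and> v \<in> X \<and> gdist E u v \<le> k}\<^sup>*)"

definition layer :: "'a set \<Rightarrow> ('a \<Rightarrow> 'a \<Rightarrow> bool) \<Rightarrow> 'a \<Rightarrow> nat \<Rightarrow> int \<Rightarrow> 'a set" where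
  "layer V E x0 lam N = {x \<in> V. N * int lam < int (gdist E x x0) \<and> int (gdist E x x0) \<le> (N + 1) * int lam}"

definition skel_block :: "'a set \<Rightarrow> ('a \<Rightarrow> 'a \<Rightarrow> bool) \<Rightarrow> 'a \<Rightarrow> nat \<Rightarrow> nat \<Rightarrow> 'a set \<Rightarrow> bool" where
  "skel_block V E x0 lam k B \<longleftrightarrow> (\<exists>N. B \<subseteq> layer V E x0 lam N \<and> B \<noteq> {} \<and> k_connected E k B \<and>
     (\<forall>C. B \<subseteq> C \<and> C \<subseteq> layer V E x0 lam N \<and> k_connected E k C \<longrightarrow> C = B))"

definition skel_vertices :: "'a set \<Rightarrow> ('a \<Rightarrow> 'a \<Rightarrow> bool) \<Rightarrow> 'a \<Rightarrow> nat \<Rightarrow> nat \<Rightarrow> 'a set set" where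
  "skel_vertices V E x0 lam k = {B. skel_block V E x0 lam k B}"

definition skel_edge :: "'a set \<Rightarrow> ('a \<Rightarrow> 'a \<Rightarrow> bool) \<Rightarrow> 'a \<Rightarrow> nat \<Rightarrow> nat \<Rightarrow> 'a set \<Rightarrow> 'a set \<Rightarrow> bool" where
  "skel_edge V E x0 lam k B B' \<longleftrightarrow> skel_block V E x0 lam k B \<and> skel_block V E x0 lam k B' \<and>
     B \<noteq> B' \<and> (\<exists>u\<in>B. \<exists>v\<in>B'. E u v)"

definition skel_map :: "'a set \<Rightarrow> ('a \<Rightarrow> 'a \<Rightarrow> bool) \<Rightarrow> 'a \<Rightarrow> nat \<Rightarrow> nat \<Rightarrow> 'a \<Rightarrow> 'a set" where
  "skel_map V E x0 lam k v = (THE B. skel_block V E x0 lam k B \<and> v \<in> B)"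

end

theory Submission
  imports Defs
begin

lemma adj_iff: "(x, y) \<in> adj E \<longleftrightarrow> E x y"
  by (simp add: adj_def)

lemma relpow_sym:
  assumes g: "graph V E"
  shows "(x, y) \<in> (adj E) ^^ n \<Longrightarrow> (y, x) \<in> (adj E) ^^ n"
proof (induction n arbitrary: x y)
  case 0
  then show ?case by simp
next
  case (Suc n)
  then obtain z where "(x, z) \<in> (adj E) ^^ n" "(z, y) \<in> adj E" by auto
  then have "(z, x) \<in> (adj E) ^^ n" "(y, z) \<in> adj E"
    using Suc.IH g by (auto simp: adj_iff graph_def)
  then show ?case by (metis relpow_Suc_I2)
qed

lemma gdist_sym: "graph V E \<Longrightarrow> gdist E x y = gdist E y x"
  unfolding gdist_def by (metis relpow_sym)

lemma gdist_le: "(x, y) \<in> (adj E) ^^ n \<Longrightarrow> gdist E x y \<le> n"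
  unfolding gdist_def by (rule Least_le)

lemma gdist_path: "(x, y) \<in> (adj E)\<^sup>* \<Longrightarrow> (x, y) \<in> (adj E) ^^ (gdist E x y)"
  unfolding gdist_def by (metis LeastI rtrancl_power)

lemma gdist_refl: "gdist E x x = 0"
  using gdist_le[where x=x and y=x and E=E and n=0] by simp

lemma gdist_0_eq: "(x, y) \<in> (adj E)\<^sup>* \<Longrightarrow> gdist E x y = 0 \<Longrightarrow> x = y"
  using gdist_path[of x y E] by simp

lemma gdist_edge: "E x y \<Longrightarrow> gdist E x y \<le> 1"
  using gdist_le[where x=x and y=y and E=E and n=1] by (simp add: adj_iff)

lemma gdist_tri:
  assumes "(x, y) \<in> (adj E)\<^sup>*" "(y, z) \<in> (adj E)\<^sup>*"
  shows "gdist E x z \<le> gdist E x y + gdist E y z"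
proof -
  have "(x, z) \<in> (adj E) ^^ (gdist E x y + gdist E y z)"
    using gdist_path[OF assms(1)] gdist_path[OF assms(2)] relpow_add by blast
  then show ?thesis by (rule gdist_le)
qed

lemma int_div_eq_iff:
  fixes a q b :: int
  assumes "b > 0"
  shows "a div b = q \<longleftrightarrow> q * b \<le> a \<and> a < (q + 1) * b"
proof
  assume "a div b = q"
  then show "q * b \<le> a \<and> a < (q + 1) * b"
  proof -
    have "a = b * q + a mod b" using \<open>a div b = q\<close> mult_div_mod_eq[of b a] by simp
    moreover have "0 \<le> a mod b" "a mod b < b" using assms by simp_all
    ultimately show ?thesis by (simp add: algebra_simps)
  qed
next
  assume "q * b \<le> a \<and> a < (q + 1) * b"
  then have h: "q * b \<le> a" "a < (q + 1) * b" by auto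
  have e: "b * (a div b) + a mod b = a" using mult_div_mod_eq[of b a] by simp
  have "0 \<le> a mod b" "a mod b < b" using assms by simp_all
  then have "b * (a div b) \<le> a" "a < b * (a div b) + b" using e by linarith+
  then have h2: "(a div b) * b \<le> a" "a < (a div b + 1) * b" by (simp_all add: algebra_simps)
  have "q < a div b + 1" using h(1) h2(2) assms
    by (meson le_less_trans mult_less_cancel_right_pos)
  moreover have "a div b < q + 1" using h(2) h2(1) assms
    by (meson le_less_trans mult_less_cancel_right_pos)
  ultimately show "a div b = q" by simp
qed

lemma div_step:
  fixes a c b :: int
  assumes "b > 0" "a \<le> c + b"
  shows "a div b \<le> c div b + 1"
proof -
  have "a div b \<le> (c + b) div b" using assms by (simp add: zdiv_mono1)
  also have "\<dots> = c div b + 1" using assms by (simp add: div_add_self2)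
  finally show ?thesis .
qed


lemma kc_mono_rel:
  assumes "(a, b) \<in> {(u, v). u \<in> A \<and> v \<in> A \<and> gdist E u v \<le> k}\<^sup>*" "A \<subseteq> C"
  shows "(a, b) \<in> {(u, v). u \<in> C \<and> v \<in> C \<and> gdist E u v \<le> k}\<^sup>*"
proof -
  have "{(u, v). u \<in> A \<and> v \<in> A \<and> gdist E u v \<le> k} \<subseteq> {(u, v). u \<in> C \<and> v \<in> C \<and> gdist E u v \<le> k}"
    using assms(2) by auto
  then show ?thesis using assms(1) rtrancl_mono by blast
qed

lemma kconn_union:
  assumes "k_connected E k A" "k_connected E k B" "x \<in> A" "x \<in> B"
  shows "k_connected E k (A \<union> B)"
  unfolding k_connected_def
proof (intro ballI)
  fix a b assume ab: "a \<in> A \<union> B" "b \<in> A \<union> B"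
  let ?R = "{(u, v). u \<in> A \<union> B \<and> v \<in> A \<union> B \<and> gdist E u v \<le> k}"
  have toX: "(a, x) \<in> ?R\<^sup>*"
    using ab(1) assms kc_mono_rel[of _ _ A E k "A \<union> B"] kc_mono_rel[of _ _ B E k "A \<union> B"]
    unfolding k_connected_def by blast
  have fromX: "(x, b) \<in> ?R\<^sup>*"
    using ab(2) assms kc_mono_rel[of _ _ A E k "A \<union> B"] kc_mono_rel[of _ _ B E k "A \<union> B"]
    unfolding k_connected_def by blast
  show "(a, b) \<in> ?R\<^sup>*" using toX fromX by (rule rtrancl_trans)
qed

lemma kconn_pair:
  assumes "graph V E" "gdist E x y \<le> k"
  shows "k_connected E k {x, y}"
proof -
  have "gdist E y x \<le> k" using assms gdist_sym by metis
  then show ?thesis using assms unfolding k_connected_def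
    by (auto intro: r_into_rtrancl simp: gdist_refl)
qed

locale skel =
  fixes V :: "'a set" and E :: "'a \<Rightarrow> 'a \<Rightarrow> bool" and x0 :: 'a and lam k :: nat
  assumes conn: "connected_graph V E" and x0V: "x0 \<in> V" and lam1: "lam \<ge> 1" and k1: "k \<ge> 1"
begin

lemma g: "graph V E" using conn by (simp add: connected_graph_def)

lemma reach: "x \<in> V \<Longrightarrow> y \<in> V \<Longrightarrow> (x, y) \<in> (adj E)\<^sup>*"
  using conn by (simp add: connected_graph_def)

lemma edgeV: "E u v \<Longrightarrow> u \<in> V \<and> v \<in> V"
  using g by (simp add: graph_def)

lemma reach_V: "(a, c) \<in> (adj E)\<^sup>* \<Longrightarrow> a \<in> V \<Longrightarrow> c \<in> V"
  by (induction rule: rtrancl_induct) (auto simp: adj_iff dest: edgeV)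

definition lev :: "'a \<Rightarrow> int" where
  "lev x = (int (gdist E x x0) - 1) div int lam"

lemma layer_iff: "x \<in> layer V E x0 lam N \<longleftrightarrow> x \<in> V \<and> lev x = N"
proof -
  have lp: "int lam > 0" using lam1 by simp
  have "lev x = N \<longleftrightarrow> N * int lam \<le> int (gdist E x x0) - 1 \<and> int (gdist E x x0) - 1 < (N + 1) * int lam"
    unfolding lev_def by (rule int_div_eq_iff[OF lp])
  also have "\<dots> \<longleftrightarrow> N * int lam < int (gdist E x x0) \<and> int (gdist E x x0) \<le> (N + 1) * int lam"
    by linarith
  finally show ?thesis unfolding layer_def by auto
qed

lemma lev_close:
  assumes "x \<in> V" "y \<in> V" "gdist E x y \<le> lam"
  shows "lev y \<le> lev x + 1"
proof -
  have "gdist E y x0 \<le> gdist E y x + gdist E x x0"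
    using assms x0V by (intro gdist_tri reach)
  moreover have "gdist E y x = gdist E x y" using gdist_sym[OF g] by metis
  ultimately have "int (gdist E y x0) - 1 \<le> (int (gdist E x x0) - 1) + int lam"
    using assms(3) by linarith
  then show ?thesis unfolding lev_def using lam1 by (intro div_step) auto
qed

lemma edge_lev: "E p q \<Longrightarrow> lev q \<le> lev p + 1"
  using lev_close[of p q] edgeV gdist_edge[of E p q] lam1 by auto

abbreviation blk where "blk B \<equiv> skel_block V E x0 lam k B"

lemma blk_layer:
  assumes "blk B" "x \<in> B"
  shows "B \<subseteq> layer V E x0 lam (lev x) \<and> x \<in> V"
proof -
  obtain N where N: "B \<subseteq> layer V E x0 lam N" using assms(1) unfolding skel_block_def by blast
  then have "x \<in> layer V E x0 lam N" using assms(2) by blast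
  then have "x \<in> V" "N = lev x" using layer_iff by auto
  then show ?thesis using N by simp
qed

lemma blk_unique:
  assumes "blk B1" "blk B2" "x \<in> B1" "x \<in> B2"
  shows "B1 = B2"
proof -
  have "k_connected E k B1" "k_connected E k B2" using assms(1,2) unfolding skel_block_def by auto
  then have kc: "k_connected E k (B1 \<union> B2)"
    using assms(3,4) by (rule kconn_union)
  have L: "B1 \<union> B2 \<subseteq> layer V E x0 lam (lev x)" using blk_layer[OF assms(1,3)] blk_layer[OF assms(2,4)] by simp
  have max: "\<And>B. blk B \<Longrightarrow> x \<in> B \<Longrightarrow> B \<subseteq> B1 \<union> B2 \<Longrightarrow> B1 \<union> B2 = B"
  proof -
    fix B assume b: "blk B" "x \<in> B" "B \<subseteq> B1 \<union> B2"
    then obtain N where N: "B \<subseteq> layer V E x0 lam N"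
      "\<forall>C. B \<subseteq> C \<and> C \<subseteq> layer V E x0 lam N \<and> k_connected E k C \<longrightarrow> C = B"
      unfolding skel_block_def by blast
    have "x \<in> layer V E x0 lam N" using N(1) b(2) by blast
    then have "N = lev x" using layer_iff by simp
    then have "B1 \<union> B2 \<subseteq> layer V E x0 lam N" using L by simp
    then show "B1 \<union> B2 = B" using N(2) b(3) kc by blast
  qed
  show ?thesis using max[of B1] max[of B2] assms by blast
qed

lemma blk_exists:
  assumes xV: "x \<in> V"
  shows "\<exists>B. blk B \<and> x \<in> B"
proof -
  define L where "L = layer V E x0 lam (lev x)"
  define R where "R = {(u, v). u \<in> L \<and> v \<in> L \<and> gdist E u v \<le> k}"
  define C where "C = {y. (x, y) \<in> R\<^sup>*}"
  have xL: "x \<in> L" using xV layer_iff L_def by blast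
  have xC: "x \<in> C" unfolding C_def by simp
  have CL: "C \<subseteq> L"
  proof
    fix y assume "y \<in> C"
    then have "(x, y) \<in> R\<^sup>*" by (simp add: C_def)
    then show "y \<in> L" using xL by (cases rule: rtranclE) (auto simp: R_def)
  qed
  let ?RC = "{(u, v). u \<in> C \<and> v \<in> C \<and> gdist E u v \<le> k}"
  have toRC: "(x, y) \<in> ?RC\<^sup>*" if "(x, y) \<in> R\<^sup>*" for y
    using that
  proof (induction rule: rtrancl_induct)
    case base then show ?case by simp
  next
    case (step b c)
    have "b \<in> C" "c \<in> C" using step.hyps unfolding C_def by auto
    then have "(b, c) \<in> ?RC" using step.hyps(2) by (auto simp: R_def)
    then show ?case using step.IH by (rule rtrancl_into_rtrancl[rotated])
  qed
  have symRC: "sym (?RC\<^sup>*)"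
    by (rule sym_rtrancl) (auto simp: sym_def gdist_sym[OF g])
  have kc: "k_connected E k C"
    unfolding k_connected_def
  proof (intro ballI)
    fix a b assume "a \<in> C" "b \<in> C"
    then have "(x, a) \<in> ?RC\<^sup>*" "(x, b) \<in> ?RC\<^sup>*" using toRC unfolding C_def by auto
    then have "(a, x) \<in> ?RC\<^sup>*" "(x, b) \<in> ?RC\<^sup>*" using symRC by (auto dest: symD)
    then show "(a, b) \<in> ?RC\<^sup>*" by (rule rtrancl_trans)
  qed
  have max: "D = C" if "C \<subseteq> D" "D \<subseteq> L" "k_connected E k D" for D
  proof
    show "D \<subseteq> C"
    proof
      fix c assume "c \<in> D"
      then have "(x, c) \<in> {(u, v). u \<in> D \<and> v \<in> D \<and> gdist E u v \<le> k}\<^sup>*"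
        using that xC unfolding k_connected_def by blast
      then have "(x, c) \<in> R\<^sup>*"
        unfolding R_def by (rule kc_mono_rel[OF _ that(2)])
      then show "c \<in> C" by (simp add: C_def)
    qed
  qed (use that in auto)
  have "C \<noteq> {}" using xC by blast
  then have "blk C" unfolding skel_block_def
    using CL kc max unfolding L_def by blast
  then show ?thesis using xC by blast
qed

abbreviation f where "f \<equiv> skel_map V E x0 lam k"

lemma f_prop: "x \<in> V \<Longrightarrow> blk (f x) \<and> x \<in> f x"
proof -
  assume "x \<in> V"
  then obtain B0 where "blk B0" "x \<in> B0" using blk_exists by blast
  then have "\<exists>!B. blk B \<and> x \<in> B" using blk_unique by blast
  then show ?thesis unfolding skel_map_def by (rule theI')
qed

lemma f_eq: "x \<in> V \<Longrightarrow> blk B \<Longrightarrow> x \<in> B \<Longrightarrow> f x = B"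
proof -
  assume a: "x \<in> V" "blk B" "x \<in> B"
  have "blk (f x)" "x \<in> f x" using f_prop[OF a(1)] by auto
  then show "f x = B" using blk_unique a(2,3) by blast
qed

lemma same_block:
  assumes "x \<in> V" "y \<in> V" "lev x = lev y" "gdist E x y \<le> k"
  shows "f x = f y"
proof -
  define B where "B = f x"
  have b: "blk B" "x \<in> B" using f_prop[OF assms(1)] unfolding B_def by auto
  then obtain N where N: "B \<subseteq> layer V E x0 lam N"
      "\<forall>C. B \<subseteq> C \<and> C \<subseteq> layer V E x0 lam N \<and> k_connected E k C \<longrightarrow> C = B"
      "k_connected E k B"
    unfolding skel_block_def by blast
  have "x \<in> layer V E x0 lam N" using N(1) b(2) by blast
  then have Nx: "N = lev x" using layer_iff by simp
  have "k_connected E k (B \<union> {x, y})"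
    using kconn_union[OF N(3) kconn_pair[OF g assms(4)] b(2)] by simp
  moreover have "y \<in> layer V E x0 lam N"
    using Nx assms(2,3) layer_iff by simp
  then have "B \<union> {x, y} \<subseteq> layer V E x0 lam N"
    using N(1) \<open>x \<in> layer V E x0 lam N\<close> by simp
  moreover have "B \<subseteq> B \<union> {x, y}" by blast
  ultimately have "B \<union> {x, y} = B" using N(2) by blast
  then have "y \<in> B" by blast
  then have "f y = B" using f_eq[OF assms(2) b(1)] by simp
  then show ?thesis unfolding B_def by simp
qed

lemma cross:
  "(u, w) \<in> (adj E) ^^ n \<Longrightarrow> lev u \<le> L \<Longrightarrow> L < lev w \<Longrightarrow>
    \<exists>p q i j. (u, p) \<in> (adj E) ^^ i \<and> (q, w) \<in> (adj E) ^^ j \<and> i \<le> n \<and> j \<le> n \<and> E p q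
      \<and> lev p \<le> L \<and> L < lev q"
proof (induction n arbitrary: u)
  case 0
  then show ?case by simp
next
  case (Suc n)
  from Suc.prems(1) obtain v where v: "(u, v) \<in> adj E" "(v, w) \<in> (adj E) ^^ n"
    by (blast elim: relpow_Suc_E2)
  show ?case
  proof (cases "L < lev v")
    case True
    then show ?thesis using v Suc.prems
      by (intro exI[of _ u] exI[of _ v] exI[of _ 0] exI[of _ n]) (auto simp: adj_iff)
  next
    case False
    then obtain p q i j where pq: "(v, p) \<in> (adj E) ^^ i" "(q, w) \<in> (adj E) ^^ j" "i \<le> n" "j \<le> n"
      "E p q" "lev p \<le> L" "L < lev q"
      using Suc.IH[OF v(2)] Suc.prems by force
    have "(u, p) \<in> (adj E) ^^ Suc i" using v(1) pq(1) by (rule relpow_Suc_I2)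
    then show ?thesis using pq
      by (intro exI[of _ p] exI[of _ q] exI[of _ "Suc i"] exI[of _ j]) auto
  qed
qed

abbreviation S where "S \<equiv> skel_edge V E x0 lam k"

lemma aux_edge:
  assumes uV: "u \<in> V" and wV: "w \<in> V" and d: "gdist E u w \<le> min lam k" and lt: "lev u < lev w"
  shows "S (f u) (f w)"
proof -
  let ?n = "gdist E u w"
  have path: "(u, w) \<in> (adj E) ^^ ?n" using gdist_path[OF reach[OF uV wV]] .
  obtain p q i j where pq: "(u, p) \<in> (adj E) ^^ i" "(q, w) \<in> (adj E) ^^ j" "i \<le> ?n" "j \<le> ?n"
      "E p q" "lev p \<le> lev u" "lev u < lev q"
    using cross[OF path order.refl lt] by metis
  have pV: "p \<in> V" and qV: "q \<in> V" using edgeV pq(5) by auto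
  have "lev q \<le> lev p + 1" using edge_lev pq(5) .
  then have lp: "lev p = lev u" and lq: "lev q = lev u + 1" using pq(6,7) by auto
  have "lev w \<le> lev u + 1" using lev_close[OF uV wV] d by simp
  then have lw: "lev w = lev q" using lt lq by simp
  have "gdist E u p \<le> k" using gdist_le[OF pq(1)] pq(3) d by simp
  then have fup: "f u = f p" using same_block[OF uV pV] lp by simp
  have "gdist E q w \<le> k" using gdist_le[OF pq(2)] pq(4) d by simp
  then have fqw: "f q = f w" using same_block[OF qV wV] lw by simp
  have bu: "blk (f u)" "u \<in> f u" and bw: "blk (f w)" "w \<in> f w" using f_prop uV wV by auto
  have ne: "f u \<noteq> f w"
  proof
    assume "f u = f w"
    then have "w \<in> f u" using bw(2) by simp
    then have "w \<in> layer V E x0 lam (lev u)" using blk_layer[OF bu] by blast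
    then show False using layer_iff lt by simp
  qed
  have "p \<in> f p" "q \<in> f q" using f_prop[OF pV] f_prop[OF qV] by auto
  then have "p \<in> f u" "q \<in> f w" using fup fqw by simp_all
  then have "\<exists>a\<in>f u. \<exists>b\<in>f w. E a b" using pq(5) by blast
  then show ?thesis unfolding skel_edge_def using bu(1) bw(1) ne by simp
qed

lemma one_step:
  assumes uV: "u \<in> V" and wV: "w \<in> V" and d: "gdist E u w \<le> min lam k"
  shows "f u = f w \<or> S (f u) (f w)"
proof -
  consider "lev u = lev w" | "lev u < lev w" | "lev w < lev u" by linarith
  then show ?thesis
  proof cases
    case 1 then show ?thesis using same_block[OF uV wV] d by simp
  next
    case 2 then show ?thesis using aux_edge[OF uV wV d] by simp
  next
    case 3
    have "gdist E w u \<le> min lam k" using d gdist_sym[OF g] by metis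
    then have "S (f w) (f u)" using aux_edge[OF wV uV] 3 by simp
    then have "S (f u) (f w)" unfolding skel_edge_def using g by (auto simp: graph_def)
    then show ?thesis by simp
  qed
qed

lemma chain:
  "\<forall>a b. a \<in> V \<longrightarrow> b \<in> V \<longrightarrow> gdist E a b \<le> min lam k * n \<longrightarrow>
     (\<exists>j\<le>n. (f a, f b) \<in> (adj S) ^^ j)"
proof (induction n)
  case 0
  show ?case
  proof (intro allI impI)
    fix a b assume "a \<in> V" "b \<in> V" "gdist E a b \<le> min lam k * 0"
    then have "a = b" using gdist_0_eq[OF reach[OF \<open>a \<in> V\<close> \<open>b \<in> V\<close>]] by simp
    then show "\<exists>j\<le>0. (f a, f b) \<in> (adj S) ^^ j" by (intro exI[of _ 0]) simp
  qed
next
  case (Suc n)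
  let ?M = "min lam k"
  have M1: "?M \<ge> 1" using lam1 k1 by simp
  show ?case
  proof (intro allI impI)
    fix a b assume aV: "a \<in> V" and bV: "b \<in> V" and dab: "gdist E a b \<le> ?M * Suc n"
    let ?d = "gdist E a b"
    show "\<exists>j\<le>Suc n. (f a, f b) \<in> (adj S) ^^ j"
    proof (cases "?d \<le> ?M")
      case True
      from one_step[OF aV bV True] show ?thesis
      proof
        assume "f a = f b" then show ?thesis by (intro exI[of _ 0]) simp
      next
        assume "S (f a) (f b)"
        then have "(f a, f b) \<in> (adj S) ^^ 1" by (simp add: adj_iff)
        then show ?thesis by (intro exI[of _ 1]) simp
      qed
    next
      case False
      have "?M + (?d - ?M) = ?d" using False by (simp only: not_le)
      then have "(a, b) \<in> (adj E) ^^ (?M + (?d - ?M))"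
        using gdist_path[OF reach[OF aV bV]] by simp
      then have "(a, b) \<in> (adj E) ^^ ?M O (adj E) ^^ (?d - ?M)"
        by (simp only: relpow_add)
      then obtain c where c: "(a, c) \<in> (adj E) ^^ ?M" "(c, b) \<in> (adj E) ^^ (?d - ?M)"
        by (rule relcompE) simp
      have cV: "c \<in> V" using reach_V[OF relpow_imp_rtrancl[OF c(1)] aV] .
      have "gdist E c b \<le> ?M * n" using gdist_le[OF c(2)] dab by simp
      then have "\<exists>j\<le>n. (f c, f b) \<in> (adj S) ^^ j"
        using Suc.IH cV bV by simp
      then obtain j where j: "j \<le> n" "(f c, f b) \<in> (adj S) ^^ j" by blast
      have "gdist E a c \<le> ?M" using gdist_le[OF c(1)] .
      from one_step[OF aV cV this] show ?thesis
      proof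
        assume "f a = f c" then show ?thesis using j by (intro exI[of _ j]) simp
      next
        assume "S (f a) (f c)"
        then have "(f a, f c) \<in> adj S" by (simp add: adj_iff)
        then have "(f a, f b) \<in> (adj S) ^^ Suc j" using j(2) by (rule relpow_Suc_I2)
        then show ?thesis using j by (intro exI[of _ "Suc j"]) simp
      qed
    qed
  qed
qed

end

theorem corollary9:
  fixes V :: "'a set" and E :: "'a \<Rightarrow> 'a \<Rightarrow> bool" and x0 :: 'a
    and lam k N :: nat and X Y :: "'a set"
  assumes "connected_graph V E"
    and "x0 \<in> V"
    and "lam \<ge> 1" and "k \<ge> 1"
    and "X \<in> skel_vertices V E x0 lam k" and "Y \<in> skel_vertices V E x0 lam k"
    and "gdist (skel_edge V E x0 lam k) X Y \<ge> N"
  shows "r_disjoint E (int (min lam k) * (int N - 1))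
           {v \<in> V. skel_map V E x0 lam k v = X} {v \<in> V. skel_map V E x0 lam k v = Y}"
proof -
  interpret skel V E x0 lam k using assms by unfold_locales
  let ?M = "min lam k"
  show ?thesis unfolding r_disjoint_def
  proof (intro ballI)
    fix a b assume a: "a \<in> {v \<in> V. f v = X}" and b: "b \<in> {v \<in> V. f v = Y}"
    show "int (gdist E a b) > int ?M * (int N - 1)"
    proof (cases "N = 0")
      case True
      have "int ?M \<ge> 1" using assms by simp
      then have "int ?M * (int N - 1) < 0" using True by simp
      then show ?thesis by linarith
    next
      case False
      show ?thesis
      proof (rule ccontr)
        assume "\<not> ?thesis"
        then have "int (gdist E a b) \<le> int ?M * int (N - 1)" using False by simp
        then have "gdist E a b \<le> ?M * (N - 1)" by (metis of_nat_le_iff of_nat_mult)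
        moreover have "a \<in> V" "b \<in> V" using a b by auto
        ultimately have "\<exists>j\<le>N - 1. (f a, f b) \<in> (adj S) ^^ j"
          using chain by simp
        then obtain j where j: "j \<le> N - 1" "(f a, f b) \<in> (adj S) ^^ j" by blast
        have "f a = X" "f b = Y" using a b by auto
        then have "(X, Y) \<in> (adj S) ^^ j" using j(2) by simp
        then have "gdist S X Y \<le> j" by (rule gdist_le)
        then show False using j(1) False assms(7) by simp
      qed
    qed
  qed
qed

end
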